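(* Every finite tree is a compact visibility graph.
   Context: Given a family of pairwise disjoint nonempty connected subsets ("regions") of $\mathbb{R}^2$, a sightline is a closed line segment $\overline{ab}$ with $a\in A$, $b\in B$ for two different regions $A\neq B$ of the family, such that the segment intersects no region of the family other than $A$ and $B$. A graph $G$ is a compact visibility graph if there is such a family of compact connected nonempty regions, one for each vertex of $G$, such that two distinct vertices are adjacent in $G$ if and only if there is a sightline between their regions. *)

theory Defs
  imports "HOL-Analysis.Analysis"
begin

definition simple_graph :: "'v set \<Rightarrow> ('v \<Rightarrow> 'v \<Rightarrow> bool) \<Rightarrow> bool" where
  "simple_graph V E \<longleftrightarrow> finite V \<and> (\<forall>u v. E u v \<longrightarrow> u \<in> V \<and> v \<in> V)
     \<and> (\<forall>u v. E u v \<longrightarrow> E v u) \<and> (\<forall>v. \<not> E v v)"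

definition is_walk :: "'v set \<Rightarrow> ('v \<Rightarrow> 'v \<Rightarrow> bool) \<Rightarrow> 'v list \<Rightarrow> bool" where
  "is_walk V E xs \<longleftrightarrow> xs \<noteq> [] \<and> set xs \<subseteq> V \<and>
     (\<forall>i. Suc i < length xs \<longrightarrow> E (xs ! i) (xs ! Suc i))"

definition graph_connected :: "'v set \<Rightarrow> ('v \<Rightarrow> 'v \<Rightarrow> bool) \<Rightarrow> bool" where
  "graph_connected V E \<longleftrightarrow> (\<forall>u\<in>V. \<forall>v\<in>V. \<exists>xs. is_walk V E xs \<and> hd xs = u \<and> last xs = v)"

definition is_cycle :: "'v set \<Rightarrow> ('v \<Rightarrow> 'v \<Rightarrow> bool) \<Rightarrow> 'v list \<Rightarrow> bool" where
  "is_cycle V E xs \<longleftrightarrow> is_walk V E xs \<and> distinct xs \<and> length xs \<ge> 3 \<and> E (last xs) (hd xs)"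

definition is_tree :: "'v set \<Rightarrow> ('v \<Rightarrow> 'v \<Rightarrow> bool) \<Rightarrow> bool" where
  "is_tree V E \<longleftrightarrow> simple_graph V E \<and> V \<noteq> {} \<and> graph_connected V E \<and> (\<nexists>xs. is_cycle V E xs)"

definition sightline :: "'v set \<Rightarrow> ('v \<Rightarrow> (real^2) set) \<Rightarrow> 'v \<Rightarrow> 'v \<Rightarrow> real^2 \<Rightarrow> real^2 \<Rightarrow> bool" where
  "sightline V R u v a b \<longleftrightarrow> u \<in> V \<and> v \<in> V \<and> u \<noteq> v \<and> a \<in> R u \<and> b \<in> R v \<and>
     (\<forall>w\<in>V. w \<noteq> u \<and> w \<noteq> v \<longrightarrow> closed_segment a b \<inter> R w = {})"

definition compact_visibility_graph :: "'v set \<Rightarrow> ('v \<Rightarrow> 'v \<Rightarrow> bool) \<Rightarrow> bool" where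
  "compact_visibility_graph V E \<longleftrightarrow>
     (\<exists>R :: 'v \<Rightarrow> (real^2) set.
        (\<forall>v\<in>V. compact (R v) \<and> connected (R v) \<and> R v \<noteq> {}) \<and>
        (\<forall>u\<in>V. \<forall>v\<in>V. u \<noteq> v \<longrightarrow> R u \<inter> R v = {}) \<and>
        (\<forall>u\<in>V. \<forall>v\<in>V. u \<noteq> v \<longrightarrow> (E u v \<longleftrightarrow> (\<exists>a b. sightline V R u v a b))))"

end

theory Submission
  imports Defs
begin


lemma walk_single[simp]: "is_walk V E [a] \<longleftrightarrow> a \<in> V"
  by (simp add: is_walk_def)

lemma walk_Cons2: "is_walk V E (a # b # xs) \<longleftrightarrow> a \<in> V \<and> E a b \<and> is_walk V E (b # xs)"
proof
  assume h: "is_walk V E (a # b # xs)"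
  have all: "\<forall>i. Suc i < length (a # b # xs) \<longrightarrow> E ((a # b # xs) ! i) ((a # b # xs) ! Suc i)"
    using h unfolding is_walk_def by blast
  have "E a b" using all[rule_format, of 0] by simp
  moreover have "is_walk V E (b # xs)" unfolding is_walk_def
  proof (intro conjI allI impI)
    show "b # xs \<noteq> []" by simp
    show "set (b # xs) \<subseteq> V" using h unfolding is_walk_def by auto
  next
    fix i assume "Suc i < length (b # xs)"
    then show "E ((b # xs) ! i) ((b # xs) ! Suc i)" using all[rule_format, of "Suc i"] by simp
  qed
  ultimately show "a \<in> V \<and> E a b \<and> is_walk V E (b # xs)" using h by (simp add: is_walk_def)
next
  assume h: "a \<in> V \<and> E a b \<and> is_walk V E (b # xs)"
  show "is_walk V E (a # b # xs)" unfolding is_walk_def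
  proof (intro conjI allI impI)
    show "a # b # xs \<noteq> []" by simp
    show "set (a # b # xs) \<subseteq> V" using h by (auto simp: is_walk_def)
  next
    fix i assume i: "Suc i < length (a # b # xs)"
    show "E ((a # b # xs) ! i) ((a # b # xs) ! Suc i)"
    proof (cases i)
      case 0 then show ?thesis using h by simp
    next
      case (Suc j)
      then show ?thesis using h i unfolding is_walk_def by auto
    qed
  qed
qed

lemma walk_rtranclp: "is_walk V E xs \<Longrightarrow> E\<^sup>*\<^sup>* (hd xs) (last xs)"
proof (induction xs)
  case Nil then show ?case by (simp add: is_walk_def)
next
  case (Cons a ys)
  show ?case
  proof (cases ys)
    case Nil then show ?thesis by simp
  next
    case (Cons b zs)
    have "is_walk V E (a # b # zs)" using Cons.prems \<open>ys = b # zs\<close> by simp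
    then have "E a b" "is_walk V E ys" unfolding walk_Cons2 \<open>ys = b # zs\<close> by auto
    then have "E\<^sup>*\<^sup>* b (last ys)" using Cons.IH \<open>ys = b # zs\<close> by simp
    then show ?thesis using \<open>E a b\<close> \<open>ys = b # zs\<close> by (simp add: converse_rtranclp_into_rtranclp)
  qed
qed

lemma rtranclp_walk:
  assumes sg: "simple_graph V E" and "E\<^sup>*\<^sup>* u v" and "u \<in> V"
  shows "\<exists>xs. is_walk V E xs \<and> hd xs = u \<and> last xs = v"
  using assms(2,3)
proof (induction rule: converse_rtranclp_induct)
  case base then show ?case by (intro exI[of _ "[v]"]) simp
next
  case (step a b)
  have "b \<in> V" using sg step(1) unfolding simple_graph_def by blast
  then obtain xs where xs: "is_walk V E xs" "hd xs = b" "last xs = v" using step by blast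
  then obtain ys where ys: "xs = b # ys" by (cases xs) (auto simp: is_walk_def)
  have aV: "a \<in> V" using sg step(1) unfolding simple_graph_def by blast
  have "is_walk V E (a # b # ys)" unfolding walk_Cons2 using aV step(1) xs(1) ys by simp
  then have "is_walk V E (a # xs)" using ys by simp
  then show ?case using xs ys by (intro exI[of _ "a # xs"]) simp
qed

lemma connected_iff:
  assumes "simple_graph V E"
  shows "graph_connected V E \<longleftrightarrow> (\<forall>u\<in>V. \<forall>v\<in>V. E\<^sup>*\<^sup>* u v)"
proof
  assume "graph_connected V E"
  show "\<forall>u\<in>V. \<forall>v\<in>V. E\<^sup>*\<^sup>* u v"
  proof (intro ballI)
    fix u v assume "u \<in> V" "v \<in> V"
    then obtain xs where "is_walk V E xs" "hd xs = u" "last xs = v"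
      using \<open>graph_connected V E\<close> unfolding graph_connected_def by blast
    then show "E\<^sup>*\<^sup>* u v" using walk_rtranclp by metis
  qed
next
  assume "\<forall>u\<in>V. \<forall>v\<in>V. E\<^sup>*\<^sup>* u v"
  then show "graph_connected V E" unfolding graph_connected_def using rtranclp_walk[OF assms] by blast
qed

lemma walk_mono:
  assumes "is_walk V E' xs" "V \<subseteq> W" "\<And>a b. E' a b \<Longrightarrow> E a b"
  shows "is_walk W E xs"
proof -
  have "xs \<noteq> []" "set xs \<subseteq> V" "\<forall>i. Suc i < length xs \<longrightarrow> E' (xs ! i) (xs ! Suc i)"
    using assms(1) unfolding is_walk_def by auto
  then show ?thesis unfolding is_walk_def using assms(2,3) by auto
qed

lemma walk_take:
  assumes "is_walk V E xs" "0 < n"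
  shows "is_walk V E (take n xs)"
proof -
  have h: "xs \<noteq> []" "set xs \<subseteq> V" "\<forall>i. Suc i < length xs \<longrightarrow> E (xs ! i) (xs ! Suc i)"
    using assms(1) unfolding is_walk_def by auto
  have "\<forall>i. Suc i < length (take n xs) \<longrightarrow> E (take n xs ! i) (take n xs ! Suc i)"
  proof (intro allI impI)
    fix i assume i: "Suc i < length (take n xs)"
    then have "Suc i < length xs" "Suc i < n" by auto
    then have "E (xs ! i) (xs ! Suc i)" using h(3) by blast
    then show "E (take n xs ! i) (take n xs ! Suc i)" using \<open>Suc i < n\<close> by simp
  qed
  moreover have "take n xs \<noteq> []" using h(1) assms(2) by simp
  moreover have "set (take n xs) \<subseteq> V" using h(2) set_take_subset by (rule order_trans[rotated])
  ultimately show ?thesis unfolding is_walk_def by blast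
qed

definition gpath where "gpath V E xs \<longleftrightarrow> is_walk V E xs \<and> distinct xs"

lemma leaf_exists:
  assumes T: "is_tree V E" and c2: "card V \<ge> 2"
  shows "\<exists>l p. l \<in> V \<and> p \<in> V \<and> l \<noteq> p \<and> E l p \<and> (\<forall>w. E l w \<longrightarrow> w = p)"
proof -
  have sg: "simple_graph V E" and con: "graph_connected V E" and nc: "\<nexists>xs. is_cycle V E xs"
    using T unfolding is_tree_def by auto
  have fin: "finite V" using sg simple_graph_def by blast
  have sym: "\<And>a b. E a b \<Longrightarrow> E b a" and irr: "\<And>a. \<not> E a a" and inV: "\<And>a b. E a b \<Longrightarrow> a \<in> V \<and> b \<in> V"
    using sg unfolding simple_graph_def by blast+
  have "\<not> card V \<le> Suc 0" using c2 by simp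
  then obtain u v where uv: "u \<in> V" "v \<in> V" "u \<noteq> v"
    unfolding card_le_Suc0_iff_eq[OF fin] by blast
  have "E\<^sup>*\<^sup>* u v" using con connected_iff[OF sg] uv by blast
  then obtain w where "E u w" using uv(3) by (metis converse_rtranclpE)
  moreover have "u \<in> V" "w \<in> V" "u \<noteq> w" using inV[OF \<open>E u w\<close>] irr \<open>E u w\<close> by auto
  ultimately have "gpath V E [u, w]" unfolding gpath_def walk_Cons2 by simp
  then have P2: "\<exists>xs. gpath V E xs \<and> length xs = 2" by auto
  have bnd: "\<forall>k. (\<exists>xs. gpath V E xs \<and> length xs = k) \<longrightarrow> k \<le> card V"
  proof (intro allI impI)
    fix k assume "\<exists>xs. gpath V E xs \<and> length xs = k"
    then obtain xs where "gpath V E xs" "length xs = k" by blast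
    then have "set xs \<subseteq> V" "distinct xs" unfolding gpath_def is_walk_def by auto
    have "length xs = card (set xs)" using \<open>distinct xs\<close> by (simp add: distinct_card)
    also have "\<dots> \<le> card V" using fin \<open>set xs \<subseteq> V\<close> by (rule card_mono)
    finally show "k \<le> card V" using \<open>length xs = k\<close> by simp
  qed
  obtain m where m: "\<exists>xs. gpath V E xs \<and> length xs = m" and mmax: "\<forall>k. (\<exists>xs. gpath V E xs \<and> length xs = k) \<longrightarrow> k \<le> m"
    using Nat.ex_has_greatest_nat[OF P2 bnd] by blast
  obtain ys where ys: "gpath V E ys" "length ys = m" using m by blast
  have "m \<ge> 2" using mmax P2 by blast
  then obtain l ys' where ys1: "ys = l # ys'" using ys(2) by (cases ys) auto
  then obtain p zs where "ys' = p # zs" using ys(2) \<open>m \<ge> 2\<close> by (cases ys') auto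
  then have ysd: "ys = l # p # zs" using ys1 by simp
  have lp: "E l p" "l \<in> V" "p \<in> V" "l \<noteq> p" using ys(1) ysd inV unfolding gpath_def by (auto simp: walk_Cons2)
  have leaf: "\<forall>w. E l w \<longrightarrow> w = p"
  proof (intro allI impI)
    fix w assume Elw: "E l w"
    show "w = p"
    proof (rule ccontr)
      assume wp: "w \<noteq> p"
      show False
      proof (cases "w \<in> set ys")
        case False
        have "gpath V E (w # ys)" using ys(1) False Elw sym inV ysd unfolding gpath_def by (auto simp: walk_Cons2)
        then show False using mmax ys(2) by fastforce
      next
        case True
        then obtain j where j: "j < length ys" "ys ! j = w" by (meson in_set_conv_nth)
        have "j \<noteq> 0"
        proof
          assume "j = 0"
          then have "w = l" using j ysd by simp
          then show False using Elw irr by blast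
        qed
        moreover have "j \<noteq> 1" using j ysd wp by auto
        ultimately have j2: "j \<ge> 2" by auto
        define cs where "cs = take (Suc j) ys"
        have "is_walk V E cs" unfolding cs_def using ys(1) unfolding gpath_def by (simp add: walk_take)
        moreover have "distinct cs" unfolding cs_def using ys(1) unfolding gpath_def by simp
        moreover have "length cs \<ge> 3" unfolding cs_def using j j2 by auto
        moreover have "last cs = w" unfolding cs_def using j by (simp add: take_Suc_conv_app_nth)
        moreover have "hd cs = l" unfolding cs_def using ysd by simp
        ultimately have "is_cycle V E cs" unfolding is_cycle_def using sym Elw by auto
        then show False using nc by blast
      qed
    qed
  qed
  show ?thesis using lp leaf by blast
qed

lemma tree_remove_leaf:
  assumes T: "is_tree V E" and l: "l \<in> V" "p \<in> V" "l \<noteq> p" "E l p" and leaf: "\<forall>w. E l w \<longrightarrow> w = p"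
  shows "is_tree (V - {l}) (\<lambda>u w. E u w \<and> u \<noteq> l \<and> w \<noteq> l)"
proof -
  define E' where "E' = (\<lambda>u w. E u w \<and> u \<noteq> l \<and> w \<noteq> l)"
  have sg: "simple_graph V E" and con: "graph_connected V E" and nc: "\<nexists>xs. is_cycle V E xs"
    using T unfolding is_tree_def by auto
  have sym: "\<And>a b. E a b \<Longrightarrow> E b a" and irr: "\<And>a. \<not> E a a" and inV: "\<And>a b. E a b \<Longrightarrow> a \<in> V \<and> b \<in> V"
    using sg unfolding simple_graph_def by blast+
  have sg': "simple_graph (V - {l}) E'" using sg unfolding simple_graph_def E'_def by auto
  have "\<forall>u\<in>V - {l}. \<forall>v\<in>V - {l}. E'\<^sup>*\<^sup>* u v"
  proof (intro ballI)
    fix u v assume u: "u \<in> V - {l}" and v: "v \<in> V - {l}"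
    have "E\<^sup>*\<^sup>* u v" using con connected_iff[OF sg] u v by blast
    then have "(v = l \<and> E'\<^sup>*\<^sup>* u p) \<or> (v \<noteq> l \<and> E'\<^sup>*\<^sup>* u v)"
    proof (induction rule: rtranclp_induct)
      case base then show ?case using u by auto
    next
      case (step a b)
      show ?case
      proof (cases "a = l")
        case True
        then have "b = p" using step(2) leaf by blast
        then show ?thesis using step(3) True l by auto
      next
        case False
        then have ua: "E'\<^sup>*\<^sup>* u a" using step(3) by auto
        show ?thesis
        proof (cases "b = l")
          case True
          then have "a = p" using step(2) leaf sym by blast
          then show ?thesis using ua True by auto
        next
          case False
          then have "E' a b" using \<open>a \<noteq> l\<close> step(2) by (simp add: E'_def)
          then show ?thesis using ua False by (meson rtranclp.rtrancl_into_rtrancl)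
        qed
      qed
    qed
    then show "E'\<^sup>*\<^sup>* u v" using v by auto
  qed
  then have con': "graph_connected (V - {l}) E'" using connected_iff[OF sg'] by blast
  have nc': "\<nexists>xs. is_cycle (V - {l}) E' xs"
  proof
    assume "\<exists>xs. is_cycle (V - {l}) E' xs"
    then obtain xs where "is_cycle (V - {l}) E' xs" by blast
    then have "is_walk (V - {l}) E' xs" "distinct xs" "length xs \<ge> 3" "E' (last xs) (hd xs)"
      unfolding is_cycle_def by auto
    moreover have "is_walk V E xs" using walk_mono[OF \<open>is_walk (V - {l}) E' xs\<close>, of V E] by (auto simp: E'_def)
    ultimately have "is_cycle V E xs" unfolding is_cycle_def by (auto simp: E'_def)
    then show False using nc by blast
  qed
  have "V - {l} \<noteq> {}" using l by auto
  then have "is_tree (V - {l}) E'" using sg' con' nc' unfolding is_tree_def by blast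
  then show ?thesis unfolding E'_def .
qed



definition INV :: "'v set \<Rightarrow> ('v \<Rightarrow> 'v \<Rightarrow> bool) \<Rightarrow> ('v \<Rightarrow> (real^2) set) \<Rightarrow> ('v \<Rightarrow> real^2) \<Rightarrow> ('v \<Rightarrow> real) \<Rightarrow> bool" where
"INV V E R x r \<longleftrightarrow>
 (\<forall>v\<in>V. compact (R v) \<and> connected (R v) \<and> x v \<in> R v \<and> r v > 0 \<and> (\<forall>y\<in>R v \<inter> ball (x v) (r v). y$1 \<le> x v $1)) \<and>
 (\<forall>u\<in>V. \<forall>w\<in>V. u \<noteq> w \<longrightarrow> R u \<inter> R w = {} \<and> ball (x u) (r u) \<inter> R w = {} \<and> ball (x u) (r u) \<inter> ball (x w) (r w) = {}) \<and>
 (\<forall>u\<in>V. \<forall>w\<in>V. u \<noteq> w \<longrightarrow> E u w \<longrightarrow> (\<exists>a b. a \<in> R u \<and> b \<in> R w \<and> (\<forall>z\<in>V. z \<noteq> u \<and> z \<noteq> w \<longrightarrow> closed_segment a b \<inter> R z = {}) \<and> (\<forall>z\<in>V. closed_segment a b \<inter> ball (x z) (r z) = {}))) \<and>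
 (\<forall>u\<in>V. \<forall>w\<in>V. u \<noteq> w \<longrightarrow> \<not> E u w \<longrightarrow> (\<forall>a\<in>R u \<union> ball (x u) (r u). \<forall>b\<in>R w \<union> ball (x w) (r w). \<exists>z\<in>V. z \<noteq> u \<and> z \<noteq> w \<and> closed_segment a b \<inter> R z \<noteq> {}))"

lemma INV_cvg:
  assumes "INV V E R x r"
  shows "compact_visibility_graph V E"
  unfolding compact_visibility_graph_def
proof (intro exI[of _ R] conjI ballI impI)
  fix v assume "v \<in> V"
  then show "compact (R v)" "connected (R v)" "R v \<noteq> {}" using assms unfolding INV_def by auto
next
  fix u v assume "u \<in> V" "v \<in> V" "u \<noteq> v"
  then show "R u \<inter> R v = {}" using assms unfolding INV_def by auto
next
  fix u v assume uv: "u \<in> V" "v \<in> V" "u \<noteq> v"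
  show "E u v = (\<exists>a b. sightline V R u v a b)"
  proof
    assume "E u v"
    then show "\<exists>a b. sightline V R u v a b" using assms uv unfolding INV_def sightline_def by meson
  next
    assume "\<exists>a b. sightline V R u v a b"
    then obtain a b where s: "sightline V R u v a b" by blast
    show "E u v"
    proof (rule ccontr)
      assume "\<not> E u v"
      then obtain z where "z \<in> V" "z \<noteq> u" "z \<noteq> v" "closed_segment a b \<inter> R z \<noteq> {}"
        using assms uv s unfolding INV_def sightline_def by (metis UnI1)
      then show False using s unfolding sightline_def by blast
    qed
  qed
qed

definition e1 :: "real^2" where "e1 = vector [1, 0]"
definition e2 :: "real^2" where "e2 = vector [0, 1]"

lemma e_simps[simp]: "e1 $ 1 = 1" "e2 $ 1 = 0" "norm e1 = 1" "norm e2 = 1"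
  by (simp_all add: e1_def e2_def norm_vec_def L2_set_def UNIV_2 vector_def)

lemma comp1_le_dist: "\<bar>y $ 1 - z $ 1\<bar> \<le> dist y z"
  using component_le_norm_cart[of "y - z" 1] by (simp add: dist_norm)

lemma seg_meets_sphere:
  fixes a b c :: "real^2"
  assumes "dist c a \<le> s" "dist c b > s"
  shows "closed_segment a b \<inter> sphere c s \<noteq> {}"
proof -
  have "closed_segment a b \<inter> frontier (cball c s) \<noteq> {}"
    apply (rule connected_Int_frontier)
    using assms by auto
  then show ?thesis by simp
qed

lemma INV_step:
  fixes l :: 'v
  assumes inv: "INV V E' R x r" and p: "p \<in> V" and l: "l \<notin> V"
    and EE: "\<And>u w. u \<in> V \<Longrightarrow> w \<in> V \<Longrightarrow> E u w = E' u w"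
    and Elp: "E l p" "E p l"
    and En: "\<And>w. w \<in> V \<Longrightarrow> w \<noteq> p \<Longrightarrow> \<not> E l w \<and> \<not> E w l"
  shows "\<exists>R x r. INV (insert l V) E R x r"
proof -
  note I = inv[unfolded INV_def]
  note I1' = conjunct1[OF I] and I2' = conjunct1[OF conjunct2[OF I]]
    and I3' = conjunct1[OF conjunct2[OF conjunct2[OF I]]] and I4' = conjunct2[OF conjunct2[OF conjunct2[OF I]]]
  have I1: "\<And>v. v \<in> V \<Longrightarrow> compact (R v) \<and> connected (R v) \<and> x v \<in> R v \<and> r v > 0 \<and> (\<forall>y\<in>R v \<inter> ball (x v) (r v). y$1 \<le> x v $1)"
    using I1' by blast
  have I2: "\<And>u w. u \<in> V \<Longrightarrow> w \<in> V \<Longrightarrow> u \<noteq> w \<Longrightarrow> R u \<inter> R w = {} \<and> ball (x u) (r u) \<inter> R w = {} \<and> ball (x u) (r u) \<inter> ball (x w) (r w) = {}"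
    using I2' by blast
  have I3: "\<And>u w. u \<in> V \<Longrightarrow> w \<in> V \<Longrightarrow> u \<noteq> w \<Longrightarrow> E' u w \<Longrightarrow> (\<exists>a b. a \<in> R u \<and> b \<in> R w \<and> (\<forall>z\<in>V. z \<noteq> u \<and> z \<noteq> w \<longrightarrow> closed_segment a b \<inter> R z = {}) \<and> (\<forall>z\<in>V. closed_segment a b \<inter> ball (x z) (r z) = {}))"
    using I3' by blast
  have I4: "\<And>u w a b. u \<in> V \<Longrightarrow> w \<in> V \<Longrightarrow> u \<noteq> w \<Longrightarrow> \<not> E' u w \<Longrightarrow> a \<in> R u \<union> ball (x u) (r u) \<Longrightarrow> b \<in> R w \<union> ball (x w) (r w) \<Longrightarrow> \<exists>z\<in>V. z \<noteq> u \<and> z \<noteq> w \<and> closed_segment a b \<inter> R z \<noteq> {}"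
    using I4' by blast
  define X where "X = x p"
  define \<rho> where "\<rho> = r p"
  have \<rho>: "\<rho> > 0" using I1[OF p] by (simp add: \<rho>_def)
  define c where "c = X + (\<rho>/4) *\<^sub>R e1"
  define P where "P = c + (\<rho>/4) *\<^sub>R e1"
  define Q where "Q = c + (\<rho>/16) *\<^sub>R e1"
  define A where "A = c + (\<rho>/16) *\<^sub>R e2"
  define B where "B = c + (\<rho>/4) *\<^sub>R e2"
  define S where "S = sphere c (\<rho>/4)"
  define L where "L = cball c (\<rho>/16)"
  define R' where "R' = (\<lambda>v. if v = l then L else if v = p then R p \<union> S else R v)"
  define x' where "x' = (\<lambda>v. if v = l then Q else if v = p then P else x v)"
  define r' where "r' = (\<lambda>v. if v = l then \<rho>/64 else if v = p then \<rho>/8 else r v)"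
  have dcX: "dist c X = \<rho>/4" using \<rho> by (simp add: c_def dist_norm)
  have PX: "P = X + (\<rho>/2) *\<^sub>R e1"
    unfolding P_def c_def by (simp add: add.assoc flip: scaleR_add_left)
  have dXP: "dist X P = \<rho>/2" using \<rho> by (simp add: PX dist_norm)
  have dcP: "dist c P = \<rho>/4" using \<rho> by (simp add: P_def dist_norm)
  have dcQ: "dist c Q = \<rho>/16" using \<rho> by (simp add: Q_def dist_norm)
  have dcA: "dist c A = \<rho>/16" using \<rho> by (simp add: A_def dist_norm)
  have dcB: "dist c B = \<rho>/4" using \<rho> by (simp add: B_def dist_norm)
  have c1: "c$1 = X$1 + \<rho>/4" by (simp add: c_def)
  have P1: "P$1 = X$1 + \<rho>/2" by (simp add: P_def c_def)
  have Q1: "Q$1 = X$1 + 5*\<rho>/16" by (simp add: Q_def c_def)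
  have A1: "A$1 = c$1" by (simp add: A_def)
  have B1: "B$1 = c$1" by (simp add: B_def)
  have cbc: "cball c (\<rho>/4) \<subseteq> ball X \<rho>"
  proof
    fix y assume "y \<in> cball c (\<rho>/4)"
    then have "dist c y \<le> \<rho>/4" by simp
    moreover have "dist X y \<le> dist X c + dist c y" by (rule dist_triangle)
    ultimately show "y \<in> ball X \<rho>" using dcX \<rho> by (simp add: dist_commute)
  qed
  have Sc: "S \<subseteq> cball c (\<rho>/4)" by (auto simp: S_def)
  have Lc: "L \<subseteq> cball c (\<rho>/4)" using \<rho> by (auto simp: L_def)
  have bQc: "ball Q (\<rho>/64) \<subseteq> cball c (\<rho>/4)"
  proof
    fix y assume "y \<in> ball Q (\<rho>/64)"
    then have "dist Q y < \<rho>/64" by simp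
    moreover have "dist c y \<le> dist c Q + dist Q y" by (rule dist_triangle)
    ultimately show "y \<in> cball c (\<rho>/4)" using dcQ \<rho> by simp
  qed
  have bPX: "ball P (\<rho>/8) \<subseteq> ball X \<rho>"
  proof
    fix y assume "y \<in> ball P (\<rho>/8)"
    then have "dist P y < \<rho>/8" by simp
    moreover have "dist X y \<le> dist X P + dist P y" by (rule dist_triangle)
    ultimately show "y \<in> ball X \<rho>" using dXP \<rho> by simp
  qed
  have segc: "closed_segment A B \<subseteq> cball c (\<rho>/4)"
    apply (rule closed_segment_subset)
    using dcA dcB \<rho> by auto
  have seg1: "\<And>y. y \<in> closed_segment A B \<Longrightarrow> y$1 = c$1"
  proof -
    fix y assume "y \<in> closed_segment A B"
    then obtain u where "y = (1 - u) *\<^sub>R A + u *\<^sub>R B" by (auto simp: in_segment)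
    then have "y$1 = (1-u) * A$1 + u * B$1" by simp
    then show "y$1 = c$1" using A1 B1 by (simp add: algebra_simps)
  qed
  have oR: "\<And>w. w \<in> V \<Longrightarrow> w \<noteq> p \<Longrightarrow> R w \<inter> ball X \<rho> = {}"
    using I2 p unfolding X_def \<rho>_def by blast
  have oB: "\<And>w. w \<in> V \<Longrightarrow> w \<noteq> p \<Longrightarrow> ball (x w) (r w) \<inter> ball X \<rho> = {}"
    using I2 p unfolding X_def \<rho>_def by blast
  have oBR: "\<And>w. w \<in> V \<Longrightarrow> w \<noteq> p \<Longrightarrow> ball (x w) (r w) \<inter> R p = {}"
    using I2 p unfolding X_def \<rho>_def by blast
  have oleft: "\<And>y. y \<in> R p \<Longrightarrow> y \<in> ball X \<rho> \<Longrightarrow> y$1 \<le> X$1"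
    using I1[OF p] unfolding X_def \<rho>_def by blast
  have XS: "X \<in> S" using dcX by (simp add: S_def)
  have XR: "X \<in> R p" using I1[OF p] by (simp add: X_def)
  have D1: "L \<inter> (R p \<union> S) = {}"
  proof -
    { fix y assume y: "y \<in> L" "y \<in> R p"
      then have "y \<in> ball X \<rho>" using Lc cbc by blast
      then have "y$1 \<le> X$1" using oleft y by blast
      moreover have "\<bar>c$1 - y$1\<bar> \<le> dist c y" by (rule comp1_le_dist)
      ultimately have False using y(1) c1 \<rho> by (simp add: L_def) }
    moreover have "L \<inter> S = {}" using \<rho> by (auto simp: L_def S_def)
    ultimately show ?thesis by blast
  qed
  have LX: "L \<subseteq> ball X \<rho>" and SX: "S \<subseteq> ball X \<rho>" and QX: "ball Q (\<rho>/64) \<subseteq> ball X \<rho>"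
    using Lc Sc bQc cbc by blast+
  have D2: "\<And>w. w \<in> V \<Longrightarrow> w \<noteq> p \<Longrightarrow> L \<inter> R w = {} \<and> (R p \<union> S) \<inter> R w = {}"
  proof -
    fix w assume w: "w \<in> V" "w \<noteq> p"
    have "R w \<inter> ball X \<rho> = {}" using oR[OF w] .
    moreover have "R p \<inter> R w = {}" using I2[OF p w(1)] w(2) by auto
    ultimately show "L \<inter> R w = {} \<and> (R p \<union> S) \<inter> R w = {}" using LX SX by auto
  qed
  have D3: "ball Q (\<rho>/64) \<inter> (R p \<union> S) = {}"
  proof -
    { fix y assume y: "y \<in> ball Q (\<rho>/64)" "y \<in> R p"
      then have "y \<in> ball X \<rho>" using bQc cbc by blast
      then have "y$1 \<le> X$1" using oleft y by blast
      moreover have "\<bar>Q$1 - y$1\<bar> \<le> dist Q y" by (rule comp1_le_dist)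
      ultimately have False using y(1) Q1 \<rho> by simp }
    moreover
    { fix y assume y: "y \<in> ball Q (\<rho>/64)" "y \<in> S"
      have "dist c y \<le> dist c Q + dist Q y" by (rule dist_triangle)
      then have False using y dcQ \<rho> by (simp add: S_def) }
    ultimately show ?thesis by blast
  qed
  have D4: "\<And>w. w \<in> V \<Longrightarrow> w \<noteq> p \<Longrightarrow> ball Q (\<rho>/64) \<inter> R w = {} \<and> ball P (\<rho>/8) \<inter> R w = {} \<and> ball (x w) (r w) \<inter> L = {} \<and> ball (x w) (r w) \<inter> (R p \<union> S) = {}"
  proof -
    fix w assume w: "w \<in> V" "w \<noteq> p"
    have "R w \<inter> ball X \<rho> = {}" "ball (x w) (r w) \<inter> ball X \<rho> = {}" "ball (x w) (r w) \<inter> R p = {}"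
      using oR[OF w] oB[OF w] oBR[OF w] by auto
    then show "ball Q (\<rho>/64) \<inter> R w = {} \<and> ball P (\<rho>/8) \<inter> R w = {} \<and> ball (x w) (r w) \<inter> L = {} \<and> ball (x w) (r w) \<inter> (R p \<union> S) = {}"
      using QX bPX LX SX by auto
  qed
  have D5: "ball P (\<rho>/8) \<inter> L = {}"
  proof -
    { fix y assume y: "y \<in> ball P (\<rho>/8)" "y \<in> L"
      have "dist c P \<le> dist c y + dist y P" by (rule dist_triangle)
      then have False using y dcP \<rho> by (simp add: L_def dist_commute) }
    then show ?thesis by blast
  qed
  have D6: "ball Q (\<rho>/64) \<inter> ball P (\<rho>/8) = {}"
  proof -
    { fix y assume y: "y \<in> ball Q (\<rho>/64)" "y \<in> ball P (\<rho>/8)"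
      have "\<bar>Q$1 - y$1\<bar> \<le> dist Q y" "\<bar>P$1 - y$1\<bar> \<le> dist P y" by (rule comp1_le_dist)+
      then have False using y P1 Q1 \<rho> by simp }
    then show ?thesis by blast
  qed
  have D7: "\<And>w. w \<in> V \<Longrightarrow> w \<noteq> p \<Longrightarrow> ball Q (\<rho>/64) \<inter> ball (x w) (r w) = {} \<and> ball P (\<rho>/8) \<inter> ball (x w) (r w) = {}"
  proof -
    fix w assume w: "w \<in> V" "w \<noteq> p"
    have "ball (x w) (r w) \<inter> ball X \<rho> = {}" using oB[OF w] .
    then show "ball Q (\<rho>/64) \<inter> ball (x w) (r w) = {} \<and> ball P (\<rho>/8) \<inter> ball (x w) (r w) = {}"
      using QX bPX by auto
  qed
  have "INV (insert l V) E R' x' r'"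
    unfolding INV_def
  proof (intro conjI)
    show "\<forall>v\<in>insert l V. compact (R' v) \<and> connected (R' v) \<and> x' v \<in> R' v \<and> r' v > 0 \<and> (\<forall>y\<in>R' v \<inter> ball (x' v) (r' v). y$1 \<le> x' v $1)"
    proof
      fix v assume v: "v \<in> insert l V"
      consider "v = l" | "v = p" | "v \<in> V" "v \<noteq> p" "v \<noteq> l" using v by blast
      then show "compact (R' v) \<and> connected (R' v) \<and> x' v \<in> R' v \<and> r' v > 0 \<and> (\<forall>y\<in>R' v \<inter> ball (x' v) (r' v). y$1 \<le> x' v $1)"
      proof cases
        case 1
        have "\<forall>y\<in>L. y$1 \<le> Q$1"
        proof
          fix y assume "y \<in> L"
          moreover have "\<bar>y$1 - c$1\<bar> \<le> dist y c" by (rule comp1_le_dist)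
          ultimately show "y$1 \<le> Q$1" using Q1 c1 by (simp add: L_def dist_commute)
        qed
        then show ?thesis using 1 \<rho> dcQ by (auto simp: R'_def x'_def r'_def L_def)
      next
        case 2
        have "l \<noteq> p" using l p by blast
        have left: "\<forall>y\<in>(R p \<union> S) \<inter> ball P (\<rho>/8). y$1 \<le> P$1"
        proof
          fix y assume y: "y \<in> (R p \<union> S) \<inter> ball P (\<rho>/8)"
          show "y$1 \<le> P$1"
          proof (cases "y \<in> R p")
            case True
            then have "y$1 \<le> X$1" using oleft y bPX by blast
            then show ?thesis using P1 \<rho> by simp
          next
            case False
            then have "y \<in> S" using y by blast
            moreover have "\<bar>y$1 - c$1\<bar> \<le> dist y c" by (rule comp1_le_dist)
            ultimately show "y$1 \<le> P$1" using P1 c1 by (simp add: S_def dist_commute)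
          qed
        qed
        have "compact (R p \<union> S)" using I1[OF p] unfolding S_def by (intro compact_Un compact_sphere) auto
        moreover have "connected (R p \<union> S)"
          apply (rule connected_Un)
          using I1[OF p] XS XR by (auto simp: S_def connected_sphere)
        moreover have "P \<in> S" using dcP by (simp add: S_def)
        ultimately show ?thesis using 2 \<rho> left \<open>l \<noteq> p\<close> by (simp add: R'_def x'_def r'_def)
      next
        case 3
        then show ?thesis using I1[of v] by (simp add: R'_def x'_def r'_def)
      qed
    qed
  next
    show "\<forall>u\<in>insert l V. \<forall>w\<in>insert l V. u \<noteq> w \<longrightarrow> R' u \<inter> R' w = {} \<and> ball (x' u) (r' u) \<inter> R' w = {} \<and> ball (x' u) (r' u) \<inter> ball (x' w) (r' w) = {}"
    proof (intro ballI impI)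
      fix u w assume u: "u \<in> insert l V" and w: "w \<in> insert l V" and uw: "u \<noteq> w"
      have lp: "l \<noteq> p" using l p by blast
      consider "u = l" | "u = p" | "u \<in> V" "u \<noteq> p" "u \<noteq> l" using u by blast
      then show "R' u \<inter> R' w = {} \<and> ball (x' u) (r' u) \<inter> R' w = {} \<and> ball (x' u) (r' u) \<inter> ball (x' w) (r' w) = {}"
      proof cases
        case 1
        consider "w = p" | "w \<in> V" "w \<noteq> p" "w \<noteq> l" using w uw 1 by blast
        then show ?thesis
        proof cases
          case 1
          then show ?thesis using \<open>u = l\<close> lp D1 D3 D6 by (simp add: R'_def x'_def r'_def)
        next
          case 2
          then show ?thesis using \<open>u = l\<close> lp D2[of w] D4[of w] D7[of w] by (simp add: R'_def x'_def r'_def)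
        qed
      next
        case 2
        consider "w = l" | "w \<in> V" "w \<noteq> p" "w \<noteq> l" using w uw 2 by blast
        then show ?thesis
        proof cases
          case 1
          then show ?thesis using \<open>u = p\<close> lp D1 D5 D6 by (auto simp: R'_def x'_def r'_def)
        next
          case 2
          then show ?thesis using \<open>u = p\<close> lp D2[of w] D4[of w] D7[of w] by (auto simp: R'_def x'_def r'_def)
        qed
      next
        case 3
        consider "w = l" | "w = p" | "w \<in> V" "w \<noteq> p" "w \<noteq> l" using w uw by blast
        then show ?thesis
        proof cases
          case 1
          then show ?thesis using 3 lp D2[of u] D4[of u] D7[of u] by (auto simp: R'_def x'_def r'_def)
        next
          case 2
          then show ?thesis using 3 lp D2[of u] D4[of u] D7[of u] by (auto simp: R'_def x'_def r'_def)
        next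
          case 4: 3
          then show ?thesis using 3 uw I2[of u w] by (simp add: R'_def x'_def r'_def)
        qed
      qed
    qed
  next
    show "\<forall>u\<in>insert l V. \<forall>w\<in>insert l V. u \<noteq> w \<longrightarrow> E u w \<longrightarrow> (\<exists>a b. a \<in> R' u \<and> b \<in> R' w \<and> (\<forall>z\<in>insert l V. z \<noteq> u \<and> z \<noteq> w \<longrightarrow> closed_segment a b \<inter> R' z = {}) \<and> (\<forall>z\<in>insert l V. closed_segment a b \<inter> ball (x' z) (r' z) = {}))"
    proof (intro ballI impI)
      fix u w assume u: "u \<in> insert l V" and w: "w \<in> insert l V" and uw: "u \<noteq> w" and E: "E u w"
      have lp: "l \<noteq> p" using l p by blast
      have AL: "A \<in> R' l" using dcA by (simp add: R'_def L_def)
      have BS: "B \<in> R' p" using dcB lp by (simp add: R'_def S_def)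
      have segX: "closed_segment A B \<subseteq> ball X \<rho>" using segc cbc by blast
      have sR: "\<forall>z\<in>insert l V. z \<noteq> l \<and> z \<noteq> p \<longrightarrow> closed_segment A B \<inter> R' z = {}"
      proof (intro ballI impI)
        fix z assume "z \<in> insert l V" "z \<noteq> l \<and> z \<noteq> p"
        then have z: "z \<in> V" "z \<noteq> p" "z \<noteq> l" by auto
        then show "closed_segment A B \<inter> R' z = {}" using oR[OF z(1,2)] segX by (auto simp: R'_def)
      qed
      have sB: "\<forall>z\<in>insert l V. closed_segment A B \<inter> ball (x' z) (r' z) = {}"
      proof
        fix z assume z: "z \<in> insert l V"
        consider "z = l" | "z = p" | "z \<in> V" "z \<noteq> p" "z \<noteq> l" using z by blast
        then show "closed_segment A B \<inter> ball (x' z) (r' z) = {}"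
        proof cases
          case 1
          { fix y assume y: "y \<in> closed_segment A B" "y \<in> ball Q (\<rho>/64)"
            have "\<bar>Q$1 - y$1\<bar> \<le> dist Q y" by (rule comp1_le_dist)
            then have False using y seg1[OF y(1)] Q1 c1 \<rho> by simp }
          then show ?thesis using 1 by (auto simp: x'_def r'_def)
        next
          case 2
          { fix y assume y: "y \<in> closed_segment A B" "y \<in> ball P (\<rho>/8)"
            have "\<bar>P$1 - y$1\<bar> \<le> dist P y" by (rule comp1_le_dist)
            then have False using y seg1[OF y(1)] P1 c1 \<rho> by simp }
          then show ?thesis using 2 lp by (auto simp: x'_def r'_def)
        next
          case 3
          then show ?thesis using oB[OF 3(1,2)] segX by (auto simp: x'_def r'_def)
        qed
      qed
      consider "u = l" | "w = l" | "u \<in> V" "w \<in> V" using u w by blast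
      then show "\<exists>a b. a \<in> R' u \<and> b \<in> R' w \<and> (\<forall>z\<in>insert l V. z \<noteq> u \<and> z \<noteq> w \<longrightarrow> closed_segment a b \<inter> R' z = {}) \<and> (\<forall>z\<in>insert l V. closed_segment a b \<inter> ball (x' z) (r' z) = {})"
      proof cases
        case 1
        then have "w = p" using En[of w] w uw E by blast
        then show ?thesis using 1 AL BS sR sB by blast
      next
        case 2
        then have "u = p" using En[of u] u uw E by blast
        have cs: "closed_segment B A = closed_segment A B" by (rule closed_segment_commute)
        show ?thesis
          apply (rule exI[of _ B], rule exI[of _ A])
          unfolding cs using 2 \<open>u = p\<close> AL BS sR sB by blast
      next
        case 3
        then have ul: "u \<noteq> l" "w \<noteq> l" using l by auto
        have "E' u w" using EE[OF 3] E by simp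
        then obtain a b where ab: "a \<in> R u" "b \<in> R w" "\<forall>z\<in>V. z \<noteq> u \<and> z \<noteq> w \<longrightarrow> closed_segment a b \<inter> R z = {}"
          "\<forall>z\<in>V. closed_segment a b \<inter> ball (x z) (r z) = {}"
          using I3[OF 3 uw] by blast
        have sX: "closed_segment a b \<inter> ball X \<rho> = {}" using ab(4) p by (auto simp: X_def \<rho>_def)
        show ?thesis
        proof (rule exI[of _ a], rule exI[of _ b], intro conjI)
          show "a \<in> R' u" using ab ul by (auto simp: R'_def)
        next
          show "b \<in> R' w" using ab ul by (auto simp: R'_def)
        next
          show "\<forall>z\<in>insert l V. z \<noteq> u \<and> z \<noteq> w \<longrightarrow> closed_segment a b \<inter> R' z = {}"
          proof (intro ballI impI)
          fix z assume z: "z \<in> insert l V" "z \<noteq> u \<and> z \<noteq> w"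
          consider "z = l" | "z = p" | "z \<in> V" "z \<noteq> p" "z \<noteq> l" using z by blast
          then show "closed_segment a b \<inter> R' z = {}"
          proof cases
            case 1 then show ?thesis using sX LX by (auto simp: R'_def)
          next
            case 2 then show ?thesis using sX SX ab(3) p z lp by (auto simp: R'_def)
          next
            case 3 then show ?thesis using ab(3) z by (auto simp: R'_def)
          qed
          qed
        next
          show "\<forall>z\<in>insert l V. closed_segment a b \<inter> ball (x' z) (r' z) = {}"
          proof
          fix z assume z: "z \<in> insert l V"
          consider "z = l" | "z = p" | "z \<in> V" "z \<noteq> p" "z \<noteq> l" using z by blast
          then show "closed_segment a b \<inter> ball (x' z) (r' z) = {}"
          proof cases
            case 1 then show ?thesis using sX QX by (auto simp: x'_def r'_def)
          next
            case 2 then show ?thesis using sX bPX lp by (auto simp: x'_def r'_def)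
          next
            case 3 then show ?thesis using ab(4) by (auto simp: x'_def r'_def)
          qed
          qed
        qed
      qed
    qed
  next
    show "\<forall>u\<in>insert l V. \<forall>w\<in>insert l V. u \<noteq> w \<longrightarrow> \<not> E u w \<longrightarrow> (\<forall>a\<in>R' u \<union> ball (x' u) (r' u). \<forall>b\<in>R' w \<union> ball (x' w) (r' w). \<exists>z\<in>insert l V. z \<noteq> u \<and> z \<noteq> w \<and> closed_segment a b \<inter> R' z \<noteq> {})"
    proof (intro ballI impI)
      fix u w a b assume u: "u \<in> insert l V" and w: "w \<in> insert l V" and uw: "u \<noteq> w" and E: "\<not> E u w"
        and a: "a \<in> R' u \<union> ball (x' u) (r' u)" and b: "b \<in> R' w \<union> ball (x' w) (r' w)"
      have lp: "l \<noteq> p" using l p by blast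
      have old: "R' v \<union> ball (x' v) (r' v) \<subseteq> R v \<union> ball (x v) (r v)" if "v \<in> V" for v
      proof (cases "v = p")
        case True
        then show ?thesis using lp SX bPX by (auto simp: R'_def x'_def r'_def X_def \<rho>_def)
      next
        case False
        then show ?thesis using that l by (auto simp: R'_def x'_def r'_def)
      qed
      have new: "R' l \<union> ball (x' l) (r' l) \<subseteq> cball c (\<rho>/4)" using Lc bQc by (auto simp: R'_def x'_def r'_def)
      have far: "dist c y > \<rho>/4" if "v \<in> V" "v \<noteq> p" "y \<in> R v \<union> ball (x v) (r v)" for v y
      proof -
        have "y \<notin> ball X \<rho>" using oR[OF that(1,2)] oB[OF that(1,2)] that(3) by blast
        then have "dist X y \<ge> \<rho>" by simp
        moreover have "dist X y \<le> dist X c + dist c y" by (rule dist_triangle)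
        ultimately show ?thesis using dcX \<rho> by (simp add: dist_commute)
      qed
      have Sp: "S \<subseteq> R' p" using lp by (auto simp: R'_def)
      consider "u = l" | "w = l" | "u \<in> V" "w \<in> V" using u w by blast
      then show "\<exists>z\<in>insert l V. z \<noteq> u \<and> z \<noteq> w \<and> closed_segment a b \<inter> R' z \<noteq> {}"
      proof cases
        case 1
        then have wV: "w \<in> V" "w \<noteq> p" using w uw E Elp by auto
        have "dist c a \<le> \<rho>/4" using new a 1 by auto
        moreover have "dist c b > \<rho>/4" using far[OF wV] old[OF wV(1)] b by blast
        ultimately have "closed_segment a b \<inter> S \<noteq> {}" unfolding S_def by (rule seg_meets_sphere)
        then show ?thesis using Sp wV 1 lp p by (intro bexI[of _ p]) auto
      next
        case 2
        then have uV: "u \<in> V" "u \<noteq> p" using u uw E Elp by auto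
        have "dist c b \<le> \<rho>/4" using new b 2 by auto
        moreover have "dist c a > \<rho>/4" using far[OF uV] old[OF uV(1)] a by blast
        ultimately have "closed_segment b a \<inter> S \<noteq> {}" unfolding S_def by (rule seg_meets_sphere)
        moreover have "closed_segment b a = closed_segment a b" by (rule closed_segment_commute)
        ultimately have "closed_segment a b \<inter> R' p \<noteq> {}" using Sp by auto
        then show ?thesis using uV 2 lp p by (intro bexI[of _ p]) auto
      next
        case 3
        have "\<not> E' u w" using EE[OF 3] E by simp
        then obtain z where z: "z \<in> V" "z \<noteq> u" "z \<noteq> w" "closed_segment a b \<inter> R z \<noteq> {}"
          using I4[OF 3 uw] old[OF 3(1)] old[OF 3(2)] a b by blast
        have "R z \<subseteq> R' z" using z(1) l by (auto simp: R'_def)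
        then show ?thesis using z by blast
      qed
    qed
  qed
  then show ?thesis by blast
qed


lemma tree_INV: "is_tree V E \<Longrightarrow> \<exists>R x r. INV V E R x r"
proof (induction "card V" arbitrary: V E rule: less_induct)
  case less
  have sg: "simple_graph V E" and ne: "V \<noteq> {}" using less.prems unfolding is_tree_def by auto
  have fin: "finite V" using sg unfolding simple_graph_def by blast
  have sym: "\<And>a b. E a b \<Longrightarrow> E b a" using sg unfolding simple_graph_def by blast
  show ?case
  proof (cases "card V \<ge> 2")
    case False
    moreover have "card V > 0" using ne fin by (simp add: card_gt_0_iff)
    ultimately have "card V = 1" by linarith
    then obtain v where V: "V = {v}" by (rule card_1_singletonE)
    have "INV V E (\<lambda>_. {0}) (\<lambda>_. 0) (\<lambda>_. 1)" unfolding INV_def V by simp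
    then show ?thesis by blast
  next
    case True
    obtain l p where lp: "l \<in> V" "p \<in> V" "l \<noteq> p" "E l p" and leaf: "\<forall>w. E l w \<longrightarrow> w = p"
      using leaf_exists[OF less.prems True] by blast
    define E' where "E' = (\<lambda>u w. E u w \<and> u \<noteq> l \<and> w \<noteq> l)"
    have T': "is_tree (V - {l}) E'" unfolding E'_def by (rule tree_remove_leaf[OF less.prems lp leaf])
    have "card (V - {l}) < card V" using fin lp(1) by (rule card_Diff1_less)
    then obtain R x r where inv: "INV (V - {l}) E' R x r" using less.hyps T' by blast
    have "\<exists>R x r. INV (insert l (V - {l})) E R x r"
    proof (rule INV_step[OF inv])
      show "p \<in> V - {l}" using lp by blast
      show "l \<notin> V - {l}" by blast
      show "\<And>u w. u \<in> V - {l} \<Longrightarrow> w \<in> V - {l} \<Longrightarrow> E u w = E' u w" by (auto simp: E'_def)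
      show "E l p" "E p l" using lp sym by auto
      show "\<And>w. w \<in> V - {l} \<Longrightarrow> w \<noteq> p \<Longrightarrow> \<not> E l w \<and> \<not> E w l" using leaf sym by blast
    qed
    moreover have "insert l (V - {l}) = V" using lp by blast
    ultimately show ?thesis by simp
  qed
qed

theorem corollary2:
  fixes V :: "'v set" and E :: "'v \<Rightarrow> 'v \<Rightarrow> bool"
  assumes "is_tree V E"
  shows "compact_visibility_graph V E"
  using tree_INV[OF assms] INV_cvg by blast

end
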